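(* Let $X\in\mathbb{R}^p$ have distribution function $F$ with density $f_0$. Let $\phi(\cdot;\boldsymbol{\mu},\boldsymbol{\Sigma})$ denote the $N_p(\boldsymbol{\mu},\boldsymbol{\Sigma})$ density. Let $\mathcal{M}$ be a set of cluster configurations; each $m\in\mathcal{M}$ is a parameter $\boldsymbol{\theta}^{(m)}=\{\boldsymbol{\theta}_k^{(m)}\}_{k=1}^{K(\boldsymbol{\theta}^{(m)})}$, $\boldsymbol{\theta}_k^{(m)}=(\pi_k^{(m)},\boldsymbol{\mu}_k^{(m)},\boldsymbol{\Sigma}_k^{(m)})$ with $\pi_k^{(m)}>0$, $\sum_k\pi_k^{(m)}=1$, $\boldsymbol{\mu}_k^{(m)}\in\mathbb{R}^p$, $\boldsymbol{\Sigma}_k^{(m)}$ positive definite. For such $\boldsymbol{\theta}$ define $\mathrm{qs}(\mathbf{x};\boldsymbol{\theta}_k)=\log\pi_k-\tfrac12\log\det\boldsymbol{\Sigma}_k-\tfrac12(\mathbf{x}-\boldsymbol{\mu}_k)^\top\boldsymbol{\Sigma}_k^{-1}(\mathbf{x}-\boldsymbol{\mu}_k)$, $\tau_k(\mathbf{x};\boldsymbol{\theta})=\exp(\mathrm{qs}(\mathbf{x};\boldsymbol{\theta}_k))/\sum_{j=1}^{K(\boldsymbol{\theta})}\exp(\mathrm{qs}(\mathbf{x};\boldsymbol{\theta}_j))$, $$T(\boldsymbol{\theta})=\sum_{k=1}^{K(\boldsymbol{\theta})}\int\tau_k(\mathbf{x};\boldsymbol{\theta})\,\mathrm{qs}(\mathbf{x};\boldsymbol{\theta}_k)\,dF,$$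 the Gaussian mixture density $\psi_\phi(\mathbf{x};\boldsymbol{\theta})=\sum_{k=1}^{K(\boldsymbol{\theta})}\pi_k\phi(\mathbf{x};\boldsymbol{\mu}_k,\boldsymbol{\Sigma}_k)$, the posterior weights $\omega_{\phi,k}(\mathbf{x};\boldsymbol{\theta})=\pi_k\phi(\mathbf{x};\boldsymbol{\mu}_k,\boldsymbol{\Sigma}_k)/\psi_\phi(\mathbf{x};\boldsymbol{\theta})$, and the entropy $\mathrm{Ent}_\phi(\mathbf{x};\boldsymbol{\theta})=-\sum_{k=1}^{K(\boldsymbol{\theta})}\omega_{\phi,k}(\mathbf{x};\boldsymbol{\theta})\log\omega_{\phi,k}(\mathbf{x};\boldsymbol{\theta})$. Let $D_{KL}(f_0\,\|\,g)=\int f_0\log(f_0/g)$ denote the Kullback–Leibler divergence. Assuming all expectations involved exist (and are finite), $$\operatorname*{arg\,max}_{m\in\mathcal{M}}T(\boldsymbol{\theta}^{(m)})=\operatorname*{arg\,min}_{m\in\mathcal{M}}\Big\{D_{KL}\big(f_0\,\|\,\psi_\phi(\cdot;\boldsymbol{\theta}^{(m)})\big)+\mathbb{E}_F\big[\mathrm{Ent}_\phi(X;\boldsymbol{\theta}^{(m)})\big]\Big\},$$ where $\mathbb{E}_F$ denotes expectation under $F$.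
   Context: $K(\boldsymbol{\theta})$ denotes the number of groups described by the configuration $\boldsymbol{\theta}$; $\boldsymbol{\theta}_k$ represents size, center and scatter of the $k$-th cluster. $T$ is the population smooth score criterion. *)

theory Defs
  imports "HOL-Probability.Probability"
begin

text \<open>A cluster component: (weight pi_k, center mu_k, scatter Sigma_k).
  A configuration theta is a list of components; K(theta) = length theta.\<close>

type_synonym 'p comp = "real \<times> (real^'p) \<times> (real^'p^'p)"

definition pos_def_mat :: "real^'p^'p \<Rightarrow> bool" where
  "pos_def_mat S \<longleftrightarrow> transpose S = S \<and> (\<forall>x. x \<noteq> 0 \<longrightarrow> x \<bullet> (S *v x) > 0)"

definition valid_config :: "('p::finite) comp list \<Rightarrow> bool" where
  "valid_config th \<longleftrightarrow>
     (\<forall>k<length th. fst (th ! k) > 0 \<and> pos_def_mat (snd (snd (th ! k))))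
     \<and> (\<Sum>k<length th. fst (th ! k)) = 1"

definition qs :: "(real^'p::finite) \<Rightarrow> 'p comp \<Rightarrow> real" where
  "qs x c = (case c of (pk, mu, S) \<Rightarrow>
     ln pk - ln (det S) / 2 - ((x - mu) \<bullet> (matrix_inv S *v (x - mu))) / 2)"

definition tau :: "nat \<Rightarrow> (real^'p::finite) \<Rightarrow> ('p::finite) comp list \<Rightarrow> real" where
  "tau k x th = exp (qs x (th ! k)) / (\<Sum>j<length th. exp (qs x (th ! j)))"

definition T_crit :: "(real^'p) measure \<Rightarrow> ('p::finite) comp list \<Rightarrow> real" where
  "T_crit F th = (\<Sum>k<length th. integral\<^sup>L F (\<lambda>x. tau k x th * qs x (th ! k)))"

definition gauss_pdf :: "(real^'p::finite) \<Rightarrow> real^'p \<Rightarrow> real^'p^'p \<Rightarrow> real" where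
  "gauss_pdf x mu S =
     exp (- ((x - mu) \<bullet> (matrix_inv S *v (x - mu))) / 2)
     / sqrt ((2 * pi) ^ CARD('p) * det S)"

definition mix_pdf :: "(real^'p::finite) \<Rightarrow> ('p::finite) comp list \<Rightarrow> real" where
  "mix_pdf x th = (\<Sum>k<length th. fst (th ! k) * gauss_pdf x (fst (snd (th ! k))) (snd (snd (th ! k))))"

definition omega :: "nat \<Rightarrow> (real^'p::finite) \<Rightarrow> ('p::finite) comp list \<Rightarrow> real" where
  "omega k x th = fst (th ! k) * gauss_pdf x (fst (snd (th ! k))) (snd (snd (th ! k))) / mix_pdf x th"

definition Ent :: "(real^'p::finite) \<Rightarrow> ('p::finite) comp list \<Rightarrow> real" where
  "Ent x th = - (\<Sum>k<length th. omega k x th * ln (omega k x th))"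

definition KL_div :: "((real^'p::finite) \<Rightarrow> real) \<Rightarrow> (real^'p \<Rightarrow> real) \<Rightarrow> real" where
  "KL_div f0 g = (LINT x|lborel. f0 x * ln (f0 x / g x))"

definition argmax_set :: "('m \<Rightarrow> real) \<Rightarrow> 'm set \<Rightarrow> 'm set" where
  "argmax_set h M = {m \<in> M. \<forall>m'\<in>M. h m' \<le> h m}"

definition argmin_set :: "('m \<Rightarrow> real) \<Rightarrow> 'm set \<Rightarrow> 'm set" where
  "argmin_set h M = {m \<in> M. \<forall>m'\<in>M. h m \<le> h m'}"

end

theory Submission
  imports Defs
begin


lemma det_nz_of_posdef:
  fixes A :: "real^'p::finite^'p"
  assumes "\<And>x. x \<noteq> 0 \<Longrightarrow> x \<bullet> (A *v x) > 0"
  shows "det A \<noteq> 0"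
proof -
  have "inj ((*v) A)"
  proof (rule linear_injective_0[THEN iffD2])
    show "linear ((*v) A)" by (simp add: matrix_vector_mul_linear)
    show "\<forall>x. A *v x = 0 \<longrightarrow> x = 0" using assms by force
  qed
  then show ?thesis using det_nz_iff_inj[of "(*v) A"] by (simp add: matrix_vector_mul_linear)
qed

lemma det_pos_of_posdef:
  fixes S :: "real^'p::finite^'p"
  assumes "pos_def_mat S"
  shows "det S > 0"
proof -
  define A where "A t = t *\<^sub>R mat 1 + (1 - t) *\<^sub>R S" for t :: real
  have nz: "det (A t) \<noteq> 0" if "0 \<le> t" "t \<le> 1" for t
  proof (rule det_nz_of_posdef)
    fix x :: "real^'p" assume "x \<noteq> 0"
    have "x \<bullet> (A t *v x) = t * (x \<bullet> x) + (1 - t) * (x \<bullet> (S *v x))"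
      unfolding A_def by (simp add: matrix_vector_mult_add_rdistrib inner_add_right scaleR_matrix_vector_assoc[symmetric])
    moreover have "x \<bullet> x > 0" using \<open>x \<noteq> 0\<close> by simp
    moreover have "x \<bullet> (S *v x) > 0" using assms \<open>x \<noteq> 0\<close> unfolding pos_def_mat_def by blast
    ultimately show "x \<bullet> (A t *v x) > 0" using that
      by (smt (verit) mult_nonneg_nonneg mult_pos_pos)
  qed
  have cont: "continuous_on {0..1} (\<lambda>t. det (A t))"
    unfolding det_def A_def
    by (intro continuous_intros)
  show ?thesis
  proof (rule ccontr)
    assume "\<not> det S > 0"
    hence "det (A 0) \<le> 0" by (simp add: A_def)
    moreover have "det (A 1) = 1" by (simp add: A_def)
    ultimately obtain t where "0 \<le> t" "t \<le> 1" "det (A t) = 0"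
      using IVT'[of "\<lambda>t. det (A t)" 0 0 1] cont by auto
    with nz show False by blast
  qed
qed


lemma pointwise:
  fixes x :: "real^'p::finite" and th :: "'p comp list"
  assumes v: "valid_config th"
  shows "(\<Sum>k<length th. tau k x th * qs x (th ! k))
         = ln (mix_pdf x th) - Ent x th + real CARD('p) / 2 * ln (2 * pi)"
proof -
  define n where "n = length th"
  define a where "a k = fst (th ! k) * gauss_pdf x (fst (snd (th ! k))) (snd (snd (th ! k)))" for k
  define C where "C = sqrt ((2 * pi) ^ CARD('p))"
  have Cpos: "C > 0" unfolding C_def by simp
  have lnC: "ln C = real CARD('p) / 2 * ln (2 * pi)"
  proof -
    have "ln ((2 * pi) ^ CARD('p)) = real CARD('p) * ln (2 * pi)"
      by (rule ln_realpow)
    moreover have "ln C = ln ((2 * pi) ^ CARD('p)) / 2"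
      unfolding C_def by (rule ln_sqrt) simp
    ultimately show ?thesis by simp
  qed
  have pos: "fst (th ! k) > 0" "det (snd (snd (th ! k))) > 0" if "k < n" for k
    using v that det_pos_of_posdef unfolding valid_config_def n_def by auto
  have apos: "a k > 0" if "k < n" for k
    using pos[OF that] unfolding a_def gauss_pdf_def by simp
  have expq: "exp (qs x (th ! k)) = C * a k" if "k < n" for k
  proof -
    obtain pk mu S where th: "th ! k = (pk, mu, S)" by (metis prod.exhaust)
    have pk: "pk > 0" and d: "det S > 0" using pos[OF that] th by auto
    define Q where "Q = (x - mu) \<bullet> (matrix_inv S *v (x - mu))"
    have "exp (ln (det S) / 2) = exp (ln (sqrt (det S)))"
      using d by (simp add: ln_sqrt)
    also have "\<dots> = sqrt (det S)" using d by simp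
    finally have e1: "exp (ln (det S) / 2) = sqrt (det S)" .
    have qe: "qs x (th ! k) = ln pk - ln (det S) / 2 - Q / 2"
      by (simp add: qs_def th Q_def)
    have "exp (qs x (th ! k)) = exp (ln pk) / exp (ln (det S) / 2) / exp (Q / 2)"
      unfolding qe by (simp only: exp_diff)
    also have "\<dots> = pk * exp (- Q / 2) / sqrt (det S)"
      using pk e1 by (simp add: exp_minus field_simps)
    finally have "exp (qs x (th ! k)) = pk * exp (- Q / 2) / sqrt (det S)" .
    moreover have "a k = pk * (exp (- Q / 2) / (C * sqrt (det S)))"
      unfolding a_def gauss_pdf_def th C_def Q_def by (simp add: real_sqrt_mult)
    ultimately have "sqrt (det S) * exp (qs x (th ! k)) = sqrt (det S) * (C * a k)"
      using Cpos d by (simp add: field_simps)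
    then show ?thesis using d by simp
  qed
  have qsa: "qs x (th ! k) = ln C + ln (a k)" if "k < n" for k
  proof -
    have "qs x (th ! k) = ln (exp (qs x (th ! k)))" by simp
    also have "\<dots> = ln (C * a k)" using expq[OF that] by simp
    also have "\<dots> = ln C + ln (a k)" using Cpos apos[OF that] by (simp add: ln_mult)
    finally show ?thesis .
  qed
  have mix: "mix_pdf x th = sum a {..<n}" unfolding mix_pdf_def a_def n_def by simp
  have n0: "n > 0" using v unfolding valid_config_def n_def by (cases th) auto
  have mpos: "mix_pdf x th > 0" unfolding mix using apos n0 by (intro sum_pos) auto
  have om: "omega k x th = a k / mix_pdf x th" for k unfolding omega_def a_def by simp
  have tau: "tau k x th = omega k x th" if "k < n" for k
  proof -
    have "(\<Sum>j<n. exp (qs x (th ! j))) = C * mix_pdf x th"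
      unfolding mix sum_distrib_left by (intro sum.cong) (auto simp: expq)
    thus ?thesis using expq[OF that] Cpos unfolding tau_def om n_def by simp
  qed
  have lna: "ln (a k) = ln (omega k x th) + ln (mix_pdf x th)" if "k < n" for k
    using apos[OF that] mpos unfolding om by (simp add: ln_div)
  have som: "(\<Sum>k<n. omega k x th) = 1"
    unfolding om using mpos by (simp add: mix sum_divide_distrib[symmetric])
  have "(\<Sum>k<n. tau k x th * qs x (th ! k))
      = (\<Sum>k<n. omega k x th * ln (omega k x th) + omega k x th * (ln (mix_pdf x th) + ln C))"
    by (intro sum.cong) (auto simp: tau qsa lna algebra_simps)
  also have "\<dots> = - Ent x th + (\<Sum>k<n. omega k x th) * (ln (mix_pdf x th) + ln C)"
    unfolding Ent_def n_def sum.distrib sum_distrib_right by simp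
  finally show ?thesis using som lnC unfolding n_def by simp
qed

lemma mix_pos:
  fixes x :: "real^'p::finite" and th :: "'p comp list"
  assumes v: "valid_config th"
  shows "mix_pdf x th > 0"
proof -
  have pos: "fst (th ! k) > 0" "det (snd (snd (th ! k))) > 0" if "k < length th" for k
    using v that det_pos_of_posdef unfolding valid_config_def by auto
  have n0: "length th > 0" using v unfolding valid_config_def by (cases th) auto
  show ?thesis unfolding mix_pdf_def
    using pos n0 by (intro sum_pos) (auto simp: gauss_pdf_def)
qed

theorem proposition3:
  fixes f0 :: "real^'p \<Rightarrow> real"
    and M :: "'m set"
    and theta :: "'m \<Rightarrow> 'p comp list"
  defines "F \<equiv> density lborel (\<lambda>x. ennreal (f0 x))"
  assumes f0_meas: "f0 \<in> borel_measurable lborel"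
    and f0_nonneg: "\<And>x. f0 x \<ge> 0"
    and F_prob: "prob_space F"
    and valid: "\<And>m. m \<in> M \<Longrightarrow> valid_config (theta m)"
    and int_T: "\<And>m k. m \<in> M \<Longrightarrow> k < length (theta m) \<Longrightarrow>
        integrable F (\<lambda>x. tau k x (theta m) * qs x (theta m ! k))"
    and int_KL: "\<And>m. m \<in> M \<Longrightarrow>
        integrable lborel (\<lambda>x. f0 x * ln (f0 x / mix_pdf x (theta m)))"
    and int_Ent: "\<And>m. m \<in> M \<Longrightarrow> integrable F (\<lambda>x. Ent x (theta m))"
  shows "argmax_set (\<lambda>m. T_crit F (theta m)) M =
         argmin_set (\<lambda>m. KL_div f0 (\<lambda>x. mix_pdf x (theta m))
                          + integral\<^sup>L F (\<lambda>x. Ent x (theta m))) M"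
proof -
  define c :: real where "c = real CARD('p) / 2 * ln (2 * pi)"
  define L where "L m x = ln (mix_pdf x (theta m))" for m x
  define G where "G m x = (\<Sum>k<length (theta m). tau k x (theta m) * qs x (theta m ! k))" for m x
  define I where "I m = integral\<^sup>L F (L m)" for m
  define E where "E m = integral\<^sup>L F (\<lambda>x. Ent x (theta m))" for m
  define T where "T m = T_crit F (theta m)" for m
  define K where "K m = KL_div f0 (\<lambda>x. mix_pdf x (theta m))" for m
  interpret P: prob_space F by (rule F_prob)
  have LG: "L m = (\<lambda>x. G m x + Ent x (theta m) - c)" if "m \<in> M" for m
    using pointwise[OF valid[OF that]] unfolding L_def G_def c_def by (intro ext) simp
  have intG: "integrable F (G m)" if "m \<in> M" for m
    unfolding G_def using int_T[OF that] by (intro Bochner_Integration.integrable_sum) auto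
  have intL: "integrable F (L m)" if "m \<in> M" for m
    unfolding LG[OF that] using intG[OF that] int_Ent[OF that] by auto
  have TG: "T m = integral\<^sup>L F (G m)" if "m \<in> M" for m
    unfolding T_def T_crit_def G_def
    by (rule Bochner_Integration.integral_sum[symmetric]) (use int_T[OF that] in auto)
  have TI: "T m = I m - E m + c" if "m \<in> M" for m
  proof -
    have "I m = integral\<^sup>L F (\<lambda>x. G m x + Ent x (theta m)) - integral\<^sup>L F (\<lambda>x. c)"
      unfolding I_def LG[OF that]
      by (rule Bochner_Integration.integral_diff) (use intG[OF that] int_Ent[OF that] in auto)
    also have "\<dots> = T m + E m - c"
      unfolding TG[OF that] E_def
      by (subst Bochner_Integration.integral_add) (use intG[OF that] int_Ent[OF that] in \<open>auto simp: P.prob_space\<close>)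
    finally show ?thesis by simp
  qed
  have setsF: "sets F = sets lborel" unfolding F_def by simp
  have measL: "L m \<in> borel_measurable lborel" if "m \<in> M" for m
    using borel_measurable_integrable[OF intL[OF that]] measurable_cong_sets[OF setsF refl] by blast
  have KK: "K m - K m' = I m' - I m" if "m \<in> M" "m' \<in> M" for m m'
  proof -
    have "K m - K m' = (LINT x|lborel. f0 x * ln (f0 x / mix_pdf x (theta m))
                         - f0 x * ln (f0 x / mix_pdf x (theta m')))"
      unfolding K_def KL_div_def
      by (rule Bochner_Integration.integral_diff[symmetric]) (use int_KL that in auto)
    also have "\<dots> = (LINT x|lborel. f0 x *\<^sub>R (L m' x - L m x))"
    proof (rule Bochner_Integration.integral_cong[OF refl])
      fix x
      have p1: "mix_pdf x (theta m) > 0" and p2: "mix_pdf x (theta m') > 0"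
        using mix_pos valid that by blast+
      show "f0 x * ln (f0 x / mix_pdf x (theta m)) - f0 x * ln (f0 x / mix_pdf x (theta m'))
            = f0 x *\<^sub>R (L m' x - L m x)"
      proof (cases "f0 x = 0")
        case True then show ?thesis by simp
      next
        case False
        hence "f0 x > 0" using f0_nonneg[of x] by simp
        then show ?thesis using p1 p2 unfolding L_def
          by (simp add: ln_div algebra_simps)
      qed
    qed
    also have "\<dots> = integral\<^sup>L F (\<lambda>x. L m' x - L m x)"
      unfolding F_def
      by (rule integral_density[symmetric]) (use measL that f0_meas f0_nonneg in auto)
    also have "\<dots> = I m' - I m"
      unfolding I_def by (rule Bochner_Integration.integral_diff) (use intL that in auto)
    finally show ?thesis .
  qed
  have key: "T m + (K m + E m) = T m' + (K m' + E m')" if "m \<in> M" "m' \<in> M" for m m'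
    using TI[OF that(1)] TI[OF that(2)] KK[OF that] by simp
  show ?thesis
    unfolding argmax_set_def argmin_set_def T_def[symmetric] K_def[symmetric] E_def[symmetric]
    using key by (auto; smt (verit) key)
qed

end
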